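(* There exist absolute constants $c>0$ and $d_0$ such that for all $d\ge d_0$, $\kappa\ge10$, $K\in\mathbb N$, $\eta\ge1$ and every $x_0\in\mathbb{R}^d$ the following holds. Let $f(x)=\frac\kappa2\|x\|_2^2$, $\mathcal H(x,v)=f(x)+\frac12\|v\|_2^2$, $v_0\sim\mathcal N(0,I_d)$, and let $(x_K,v_K)$ be obtained from $(x_0,v_0)$ by $K$ leapfrog steps $v_{k+1/2}=v_k-\frac\eta2\nabla f(x_k)$, $x_{k+1}=x_k+\eta v_{k+1/2}$, $v_{k+1}=v_{k+1/2}-\frac\eta2\nabla f(x_{k+1})$. Then with probability at least $1-d^{-5}$ over $v_0$, $\mathcal H(x_0,v_0)-\mathcal H(x_K,v_K)\le-c\,d$. *)

theory Defs
  imports "HOL-Probability.Probability"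
begin

text \<open>Vectors in R^d are represented as functions nat => real; only coordinates i < d matter.\<close>

definition sqnorm :: "nat \<Rightarrow> (nat \<Rightarrow> real) \<Rightarrow> real" where
  "sqnorm d x = (\<Sum>i<d. (x i)^2)"

definition fq :: "nat \<Rightarrow> real \<Rightarrow> (nat \<Rightarrow> real) \<Rightarrow> real" where
  "fq d \<kappa> x = \<kappa> / 2 * sqnorm d x"

definition grad_fq :: "real \<Rightarrow> (nat \<Rightarrow> real) \<Rightarrow> (nat \<Rightarrow> real)" where
  "grad_fq \<kappa> x = (\<lambda>i. \<kappa> * x i)"

definition Ham :: "nat \<Rightarrow> real \<Rightarrow> (nat \<Rightarrow> real) \<times> (nat \<Rightarrow> real) \<Rightarrow> real" where
  "Ham d \<kappa> xv = fq d \<kappa> (fst xv) + 1/2 * sqnorm d (snd xv)"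

definition leapfrog_step :: "real \<Rightarrow> real \<Rightarrow> (nat \<Rightarrow> real) \<times> (nat \<Rightarrow> real) \<Rightarrow> (nat \<Rightarrow> real) \<times> (nat \<Rightarrow> real)" where
  "leapfrog_step \<kappa> \<eta> xv =
     (let x = fst xv; v = snd xv;
          vh = (\<lambda>i. v i - \<eta> / 2 * grad_fq \<kappa> x i);
          x' = (\<lambda>i. x i + \<eta> * vh i);
          v' = (\<lambda>i. vh i - \<eta> / 2 * grad_fq \<kappa> x' i)
      in (x', v'))"

definition leapfrog :: "real \<Rightarrow> real \<Rightarrow> nat \<Rightarrow> (nat \<Rightarrow> real) \<times> (nat \<Rightarrow> real) \<Rightarrow> (nat \<Rightarrow> real) \<times> (nat \<Rightarrow> real)" where
  "leapfrog \<kappa> \<eta> K = (leapfrog_step \<kappa> \<eta> ^^ K)"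

definition std_gaussian :: "nat \<Rightarrow> (nat \<Rightarrow> real) measure" where
  "std_gaussian d = PiM {..<d} (\<lambda>_. density lborel std_normal_density)"

end

theory Submission
  imports Defs
begin


fun lfAB :: "real \<Rightarrow> nat \<Rightarrow> real \<times> real" where
  "lfAB h 0 = (1, 0)"
| "lfAB h (Suc n) = (let (A, B) = lfAB h n in
     (-(h/2-1)*A + (h^2/4-h)*B, A - (h/2-1)*B))"

lemma lfAB_props:
  assumes "h \<ge> 4"
  shows "fst (lfAB h n) * snd (lfAB h n) \<le> 0 \<and>
         (fst (lfAB h n))^2 = 1 + (h^2/4-h) * (snd (lfAB h n))^2 \<and>
         (n \<ge> 1 \<longrightarrow> (snd (lfAB h n))^2 \<ge> 1)"
proof (induction n)
  case 0
  then show ?case by simp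
next
  case (Suc n)
  obtain A B where AB: "lfAB h n = (A, B)" by (cases "lfAB h n")
  define t where "t = h/2 - 1"
  have t1: "t \<ge> 1" using assms by (simp add: t_def)
  have t2: "t^2 \<ge> 1" using t1 by (simp add: one_le_power)
  have R: "h^2/4 - h = t^2 - 1" by (simp add: t_def power2_eq_square field_simps)
  from Suc AB have i1: "A*B \<le> 0" and i2: "A^2 = 1 + (t^2-1)*B^2" by (auto simp: R)
  have new: "lfAB h (Suc n) = (-t*A + (t^2-1)*B, A - t*B)"
    by (simp add: AB t_def R)
  have c1: "(-t*A + (t^2-1)*B) * (A - t*B) \<le> 0"
  proof -
    have "(-t*A + (t^2-1)*B) * (A - t*B) = -t*A^2 + (t^2 + t^2 - 1)*(A*B) - t*(t^2-1)*B^2"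
      by (simp add: algebra_simps power2_eq_square)
    also have "\<dots> \<le> 0"
    proof -
      have "t*A^2 \<ge> 0" using t1 by simp
      moreover have "(t^2 + t^2 - 1)*(A*B) \<le> 0"
        using i1 t2 by (intro mult_nonneg_nonpos[OF _ i1]) simp
      moreover have "t*(t^2-1)*B^2 \<ge> 0" using t1 by (intro mult_nonneg_nonneg) (use t2 in simp_all)
      ultimately show ?thesis by linarith
    qed
    finally show ?thesis .
  qed
  have c2: "(-t*A + (t^2-1)*B)^2 = 1 + (t^2-1)*(A - t*B)^2"
  proof -
    have "(-t*A + (t^2-1)*B)^2 - (t^2-1)*(A - t*B)^2 = A^2 - (t^2-1)*B^2"
      by (simp add: algebra_simps power2_eq_square)
    then show ?thesis using i2 by simp
  qed
  have c3: "(A - t*B)^2 \<ge> 1"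
  proof -
    have "(A - t*B)^2 = A^2 - 2*t*(A*B) + t^2*B^2" by (simp add: algebra_simps power2_eq_square)
    moreover have "t*(A*B) \<le> 0" using t1 i1 by (simp add: mult_nonneg_nonpos)
    moreover have "A^2 \<ge> 1" using i2 t1 by (simp add: mult_nonneg_nonneg) 
    moreover have "t^2*B^2 \<ge> 0" by simp
    ultimately show ?thesis by linarith
  qed
  show ?case unfolding new R fst_conv snd_conv using c1 c2 c3 by simp
qed



lemma leapfrog_closed:
  "leapfrog \<kappa> \<eta> K (x, v) =
    (\<lambda>i. fst (lfAB (\<eta>^2*\<kappa>) K) * x i + snd (lfAB (\<eta>^2*\<kappa>) K) * \<eta> * v i,
     \<lambda>i. snd (lfAB (\<eta>^2*\<kappa>) K) * \<eta> * \<kappa> * (\<eta>^2*\<kappa>/4 - 1) * x i + fst (lfAB (\<eta>^2*\<kappa>) K) * v i)"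
proof (induction K)
  case 0
  then show ?case by (simp add: leapfrog_def)
next
  case (Suc K)
  obtain A B where AB: "lfAB (\<eta>^2*\<kappa>) K = (A, B)" by (cases "lfAB (\<eta>^2*\<kappa>) K")
  have "leapfrog \<kappa> \<eta> (Suc K) (x, v) = leapfrog_step \<kappa> \<eta> (leapfrog \<kappa> \<eta> K (x, v))"
    by (simp add: leapfrog_def)
  also have "\<dots> = leapfrog_step \<kappa> \<eta> (\<lambda>i. A * x i + B * \<eta> * v i,
     \<lambda>i. B * \<eta> * \<kappa> * (\<eta>^2*\<kappa>/4 - 1) * x i + A * v i)"
    using Suc by (simp add: AB)
  finally have calc: "leapfrog \<kappa> \<eta> (Suc K) (x, v) = leapfrog_step \<kappa> \<eta> (\<lambda>i. A * x i + B * \<eta> * v i,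
     \<lambda>i. B * \<eta> * \<kappa> * (\<eta>^2*\<kappa>/4 - 1) * x i + A * v i)" .
  have new: "lfAB (\<eta>^2*\<kappa>) (Suc K) = (-((\<eta>^2*\<kappa>)/2-1)*A + ((\<eta>^2*\<kappa>)^2/4-(\<eta>^2*\<kappa>))*B, A - ((\<eta>^2*\<kappa>)/2-1)*B)"
    by (simp add: AB)
  show ?case unfolding new fst_conv snd_conv calc
    by (simp add: leapfrog_step_def Let_def grad_fq_def fun_eq_iff field_simps power2_eq_square)
qed



definition Dco :: "real \<Rightarrow> real \<Rightarrow> real \<Rightarrow> real \<Rightarrow> real \<Rightarrow> real \<Rightarrow> real" where
  "Dco \<kappa> \<eta> A B x v = \<kappa>*(A*x + B*\<eta>* v)^2 + (B*\<eta>*\<kappa>*(\<eta>^2*\<kappa>/4-1)*x + A* v)^2 - \<kappa>*x^2 - v^2"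

lemma key_quad:
  fixes \<kappa> \<eta> A B x v :: real
  defines "h \<equiv> \<eta>^2*\<kappa>"
  defines "g \<equiv> 3/10*(B^2*h^2/4) + 1/2"
  assumes kpos: "\<kappa> > 0" and h10: "h \<ge> 10"
    and AB: "A^2 = 1 + (h^2/4 - h)*B^2" and B1: "B^2 \<ge> 1"
  shows "g \<ge> 8" and "3/10 * Dco \<kappa> \<eta> A B x v + v^2/2 \<ge> g * (v + (3/10*(A*\<eta>*B*\<kappa>*h/4)/g)*x)^2"
proof -
  define C where "C = B*\<eta>*\<kappa>*(\<eta>^2*\<kappa>/4-1)"
  define D11 where "D11 = \<kappa>*B^2*h^2*(h-4)/16"
  define D12 where "D12 = A*\<eta>*B*\<kappa>*h/4"
  define D22 where "D22 = B^2*h^2/4"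
  have hsq: "h^2 \<ge> 100" 
  proof -
    have "10*10 \<le> h*h" using h10 by (intro mult_mono) auto
    then show ?thesis by (simp add: power2_eq_square)
  qed
  show g8: "g \<ge> 8"
  proof -
    have "B^2*h^2 \<ge> 1*100" using B1 hsq by (intro mult_mono) auto
    then show ?thesis unfolding g_def by simp
  qed
  have e11: "\<kappa>*A^2 + C^2 - \<kappa> = D11"
  proof -
    have "\<kappa>*A^2 + C^2 - \<kappa> = \<kappa>*(A^2 - 1) + C^2" by (simp add: algebra_simps)
    also have "\<dots> = \<kappa>*((h^2/4 - h)*B^2) + C^2" using AB by simp
    also have "\<dots> = D11" unfolding D11_def C_def h_def by (simp add: field_simps power2_eq_square)
    finally show ?thesis .
  qed
  have e12: "\<kappa>*A*B*\<eta> + C*A = D12"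
    unfolding D12_def C_def h_def by (simp add: field_simps power2_eq_square)
  have e22: "\<kappa>*B^2*\<eta>^2 + A^2 - 1 = D22"
    using AB unfolding D22_def h_def by (simp add: field_simps power2_eq_square)
  have Dexp: "Dco \<kappa> \<eta> A B x v = (\<kappa>*A^2 + C^2 - \<kappa>)*x^2 + 2*(\<kappa>*A*B*\<eta> + C*A)*x* v + (\<kappa>*B^2*\<eta>^2 + A^2 - 1)* v^2"
    unfolding Dco_def C_def by (simp add: algebra_simps power2_eq_square)
  have Dexp': "Dco \<kappa> \<eta> A B x v = D11*x^2 + 2*D12*x* v + D22* v^2"
    using Dexp e11 e12 e22 by simp
  have d12sq: "D12^2 = (1 + (h^2/4 - h)*B^2) * B^2*\<kappa>*h^3/16"
  proof -
    have "D12^2 = A^2 * (\<eta>^2*\<kappa>) * B^2*\<kappa>*h^2/16" unfolding D12_def by (simp add: power2_eq_square field_simps)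
    also have "\<dots> = (1 + (h^2/4 - h)*B^2) * B^2*\<kappa>*h^3/16" unfolding AB h_def[symmetric] by (simp add: power2_eq_square power3_eq_cube field_simps)
    finally show ?thesis .
  qed
  have det: "3/10*D11*g - (3/10*D12)^2 = 3/10*\<kappa>*B^2*h^2/32 * ((h-4) - 6/10*h)"
    unfolding g_def D11_def power_mult_distrib d12sq by (simp add: field_simps power2_eq_square power3_eq_cube)
  have detnn: "3/10*D11*g - (3/10*D12)^2 \<ge> 0"
    unfolding det using kpos h10 by (intro mult_nonneg_nonneg) auto
  have gpos: "g > 0" using g8 by simp
  have gD22: "g = 3/10*D22 + 1/2" unfolding g_def D22_def by simp
  have ident: "g*(3/10 * Dco \<kappa> \<eta> A B x v + v^2/2) - (g* v + 3/10*D12*x)^2 = (3/10*D11*g - (3/10*D12)^2)*x^2"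
    unfolding Dexp' gD22 by (simp add: algebra_simps power2_eq_square)
  have "g*(3/10 * Dco \<kappa> \<eta> A B x v + v^2/2) \<ge> (g* v + 3/10*D12*x)^2"
    using ident detnn by (smt (verit) zero_le_power2 mult_nonneg_nonneg)
  moreover have "(g* v + 3/10*D12*x)^2 = g * (g * (v + (3/10*D12/g)*x)^2)"
    using gpos by (simp add: field_simps power2_eq_square)
  ultimately have "g * (g * (v + (3/10*D12/g)*x)^2) \<le> g*(3/10 * Dco \<kappa> \<eta> A B x v + v^2/2)" by simp
  then show "3/10 * Dco \<kappa> \<eta> A B x v + v^2/2 \<ge> g * (v + (3/10*(A*\<eta>*B*\<kappa>*h/4)/g)*x)^2"
    using gpos unfolding D12_def by simp
qed



lemma nn_integral_normal_density_1: "\<sigma> > 0 \<Longrightarrow> (\<integral>\<^sup>+ x. ennreal (normal_density \<mu> \<sigma> x) \<partial>lborel) = 1"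
proof -
  assume "\<sigma> > 0"
  interpret prob_space "density lborel (normal_density \<mu> \<sigma>)" using \<open>\<sigma> > 0\<close> by (rule prob_space_normal_density)
  have "emeasure (density lborel (normal_density \<mu> \<sigma>)) UNIV = 1"
    using emeasure_space_1 by simp
  then show ?thesis by (simp add: emeasure_density)
qed

lemma one_dim_bound:
  fixes \<kappa> \<eta> A B x :: real
  assumes kpos: "\<kappa> > 0" and h10: "\<eta>^2*\<kappa> \<ge> 10"
    and AB: "A^2 = 1 + ((\<eta>^2*\<kappa>)^2/4 - \<eta>^2*\<kappa>)*B^2" and B1: "B^2 \<ge> 1"
  shows "(\<integral>\<^sup>+ v. ennreal (exp (-(3/10) * Dco \<kappa> \<eta> A B x v)) \<partial>density lborel std_normal_density) \<le> ennreal (1/4)"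
proof -
  define h where "h = \<eta>^2*\<kappa>"
  define g where "g = 3/10*(B^2*h^2/4) + 1/2"
  define \<beta> where "\<beta> = 3/10*(A*\<eta>*B*\<kappa>*h/4)/g"
  define \<sigma> where "\<sigma> = sqrt (1/(2*g))"
  have g8: "g \<ge> 8" and kq: "\<And>v. 3/10 * Dco \<kappa> \<eta> A B x v + v^2/2 \<ge> g * (v + \<beta>*x)^2"
    using key_quad[of \<kappa> \<eta> A B, OF kpos] h10 AB B1 unfolding g_def \<beta>_def h_def by auto
  have s2: "\<sigma>^2 = 1/(2*g)" unfolding \<sigma>_def using g8 by simp
  have sq: "4 * sqrt (pi/g) \<le> sqrt (2*pi)"
  proof -
    have "4 * sqrt (pi/g) = sqrt (4^2*(pi/g))" by (subst real_sqrt_mult) simp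
    also have "\<dots> \<le> sqrt (2*pi)"
      using g8 pi_gt_zero by (intro real_sqrt_le_mono) (simp add: field_simps)
    finally show ?thesis .
  qed
  have spos: "\<sigma> > 0" unfolding \<sigma>_def using g8 by simp
  have pw: "std_normal_density v * exp (-(3/10) * Dco \<kappa> \<eta> A B x v) \<le> 1/4 * normal_density (-\<beta>*x) \<sigma> v" for v
  proof -
    have "std_normal_density v * exp (-(3/10) * Dco \<kappa> \<eta> A B x v)
          = 1/sqrt(2*pi) * exp (-(3/10 * Dco \<kappa> \<eta> A B x v + v^2/2))"
      by (simp add: std_normal_density_def exp_add[symmetric] algebra_simps)
    also have "\<dots> \<le> 1/sqrt(2*pi) * exp (-(g * (v + \<beta>*x)^2))"
      using kq[of v] by (intro mult_left_mono) auto
    also have "\<dots> \<le> 1/4 * (1/sqrt(pi/g)) * exp (-(g * (v + \<beta>*x)^2))"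
    proof (intro mult_right_mono)
      have p: "sqrt (pi/g) > 0" using g8 by simp
      show "1/sqrt(2*pi) \<le> 1/4 * (1/sqrt(pi/g))"
        using sq p by (simp add: field_simps)
    qed simp
    also have "\<dots> = 1/4 * normal_density (-\<beta>*x) \<sigma> v"
      unfolding normal_density_def s2 using g8 by (simp add: field_simps)
    finally show ?thesis .
  qed
  have "(\<integral>\<^sup>+ v. ennreal (exp (-(3/10) * Dco \<kappa> \<eta> A B x v)) \<partial>density lborel std_normal_density)
     = (\<integral>\<^sup>+ v. ennreal (std_normal_density v) * ennreal (exp (-(3/10) * Dco \<kappa> \<eta> A B x v)) \<partial>lborel)"
    by (subst nn_integral_density) (auto simp: Dco_def)
  also have "\<dots> \<le> (\<integral>\<^sup>+ v. ennreal (1/4) * ennreal (normal_density (-\<beta>*x) \<sigma> v) \<partial>lborel)"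
    using pw by (intro nn_integral_mono) (simp add: ennreal_mult[symmetric])
  also have "\<dots> = ennreal (1/4) * (\<integral>\<^sup>+ v. ennreal (normal_density (-\<beta>*x) \<sigma> v) \<partial>lborel)"
    by (rule nn_integral_cmult) simp
  also have "\<dots> = ennreal (1/4)" using spos by (simp add: nn_integral_normal_density_1)
  finally show ?thesis .
qed



lemma prod_mono_ennreal:
  fixes f g :: "'a \<Rightarrow> ennreal"
  shows "(\<And>i. i \<in> A \<Longrightarrow> f i \<le> g i) \<Longrightarrow> prod f A \<le> prod g A"
  by (induct A rule: infinite_finite_induct) (auto intro!: mult_mono)

lemma pow5_le_2pow: "n \<ge> 23 \<Longrightarrow> (n::nat)^5 \<le> 2^n"
proof (induction n rule: dec_induct)
  case base
  then show ?case by simp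
next
  case (step n)
  have a: "(8*Suc n)^5 \<le> (9*n)^5" using step(1) by (intro power_mono) simp_all
  have b: "(9*n)^5 \<le> 8^5 * (2 * n^5)" by (simp add: power_mult_distrib)
  have "8^5 * (Suc n)^5 \<le> 8^5 * (2 * n^5)" using a b unfolding power_mult_distrib by linarith
  then have "(Suc n)^5 \<le> 2 * n^5" by simp
  also have "\<dots> \<le> 2 * 2^n" using step by simp
  finally show ?case by simp
qed



theorem lemma15:
  shows "\<exists>c::real > 0. \<exists>d0::nat. \<forall>d::nat \<ge> d0. \<forall>\<kappa>::real \<ge> 10. \<forall>K::nat \<ge> 1. \<forall>\<eta>::real \<ge> 1.
    \<forall>x0::nat \<Rightarrow> real.
      measure (std_gaussian d)
        {v \<in> space (std_gaussian d).
           Ham d \<kappa> (x0, v) - Ham d \<kappa> (leapfrog \<kappa> \<eta> K (x0, v)) \<le> - c * real d}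
      \<ge> 1 - 1 / real d ^ 5"
proof (intro exI[of _ "1/2"] conjI exI[of _ "23::nat"] allI impI)
  fix d :: nat and \<kappa> :: real and K :: nat and \<eta> :: real and x0 :: "nat \<Rightarrow> real"
  assume d23: "d \<ge> 23" and k10: "\<kappa> \<ge> 10" and K1: "K \<ge> 1" and e1: "\<eta> \<ge> 1"
  define h where "h = \<eta>^2*\<kappa>"
  define A where "A = fst (lfAB h K)"
  define B where "B = snd (lfAB h K)"
  have h10: "h \<ge> 10"
  proof -
    have "\<eta>^2 \<ge> 1" using e1 by (simp add: one_le_power)
    then have "1 * 10 \<le> \<eta>^2 * \<kappa>" using k10 by (intro mult_mono) auto
    then show ?thesis unfolding h_def by simp
  qed
  have ABr: "A^2 = 1 + (h^2/4 - h)*B^2" and B1: "B^2 \<ge> 1"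
    using lfAB_props[of h K] h10 K1 unfolding A_def B_def by auto
  have kpos: "\<kappa> > 0" using k10 by simp
  define N where "N = density lborel std_normal_density"
  define M where "M = std_gaussian d"
  have MN: "M = PiM {..<d} (\<lambda>_. N)" unfolding M_def N_def std_gaussian_def by simp
  have probN: "prob_space N" unfolding N_def by (rule prob_space_normal_density) simp
  interpret PP: product_prob_space "\<lambda>_. N" "{..<d}"
    by (rule product_prob_space.intro[OF product_sigma_finite.intro]) (auto intro: probN prob_space_imp_sigma_finite simp: product_prob_space_axioms_def)
  interpret M: prob_space M unfolding MN by (rule PP.P.prob_space_axioms)
  define f where "f v = (\<Sum>i<d. Dco \<kappa> \<eta> A B (x0 i) (v i))" for v :: "nat \<Rightarrow> real"
  have hamdiff: "Ham d \<kappa> (x0, v) - Ham d \<kappa> (leapfrog \<kappa> \<eta> K (x0, v)) = -(1/2) * f v" for v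
  proof -
    have "f v = \<kappa> * (\<Sum>i<d. (A * x0 i + B * \<eta> * v i)^2) + (\<Sum>i<d. (B*\<eta>*\<kappa>*(\<eta>^2*\<kappa>/4-1)*x0 i + A * v i)^2)
                - \<kappa> * (\<Sum>i<d. (x0 i)^2) - (\<Sum>i<d. (v i)^2)"
      unfolding f_def Dco_def by (simp add: sum.distrib sum_subtractf sum_distrib_left)
    then show ?thesis
      unfolding Ham_def fq_def sqnorm_def leapfrog_closed A_def B_def h_def by (simp add: algebra_simps)
  qed
  have comp: "(\<lambda>x. x i) \<in> borel_measurable M" if "i < d" for i
  proof -
    have "(\<lambda>x. x i) \<in> measurable (PiM {..<d} (\<lambda>_. N)) N"
      using that by (intro measurable_component_singleton) simp
    moreover have sN: "sets N = sets borel" unfolding N_def by simp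
    ultimately show ?thesis unfolding MN measurable_cong_sets[OF refl sN] by blast
  qed
  have fmeas[measurable]: "f \<in> borel_measurable M"
    unfolding f_def Dco_def
    by (intro borel_measurable_sum) (auto intro!: borel_measurable_add borel_measurable_diff borel_measurable_times borel_measurable_power comp)
  define S where "S = {v \<in> space M. Ham d \<kappa> (x0, v) - Ham d \<kappa> (leapfrog \<kappa> \<eta> K (x0, v)) \<le> - (1/2) * real d}"
  define Bad where "Bad = {v \<in> space M. f v < real d}"
  have SBad: "S = space M - Bad" unfolding S_def Bad_def hamdiff by auto
  have Bad_ev: "Bad \<in> M.events" unfolding Bad_def by measurable
  define u where "u v = (\<Prod>i<d. ennreal (exp (-(3/10) * Dco \<kappa> \<eta> A B (x0 i) (v i))))" for v :: "nat \<Rightarrow> real"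
  have u_eq: "u v = ennreal (exp (-(3/10) * f v))" for v
    unfolding u_def f_def by (simp add: prod_ennreal exp_sum sum_distrib_left)
  have umeas[measurable]: "u \<in> borel_measurable M"
    unfolding u_eq[abs_def] by measurable
  have fi_meas: "(\<lambda>b. ennreal (exp (-(3/10) * Dco \<kappa> \<eta> A B (x0 i) b))) \<in> borel_measurable N" for i
    unfolding N_def Dco_def by measurable
  have int: "(\<integral>\<^sup>+ v. u v \<partial>M) \<le> ennreal ((1/4)^d)"
  proof -
    have "(\<integral>\<^sup>+ v. u v \<partial>M) = (\<Prod>i<d. \<integral>\<^sup>+ b. ennreal (exp (-(3/10) * Dco \<kappa> \<eta> A B (x0 i) b)) \<partial>N)"
      unfolding u_def MN by (rule PP.product_nn_integral_prod) (simp, rule fi_meas)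
    also have "\<dots> \<le> (\<Prod>i<d. ennreal (1/4))"
    proof (rule prod_mono_ennreal)
      fix i
      show "(\<integral>\<^sup>+ b. ennreal (exp (-(3/10) * Dco \<kappa> \<eta> A B (x0 i) b)) \<partial>N) \<le> ennreal (1/4)"
        unfolding N_def using one_dim_bound[of \<kappa> \<eta> A B "x0 i"] kpos h10 ABr B1 unfolding h_def by simp
    qed
    also have "\<dots> = ennreal ((1/4)^d)" by (simp add: ennreal_power)
    finally show ?thesis .
  qed
  define E where "E = exp (3/10 * real d)"
  have Epos: "E > 0" unfolding E_def by simp
  have markov: "emeasure M {v\<in>space M. 1 \<le> ennreal E * u v} \<le> ennreal E * (\<integral>\<^sup>+ v. u v * indicator (space M) v \<partial>M)"
    by (rule nn_integral_Markov_inequality) auto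
  have ind: "(\<integral>\<^sup>+ v. u v * indicator (space M) v \<partial>M) = (\<integral>\<^sup>+ v. u v \<partial>M)"
    by (rule nn_integral_cong) simp
  have sub: "Bad \<subseteq> {v\<in>space M. 1 \<le> ennreal E * u v}"
  proof
    fix v assume v: "v \<in> Bad"
    then have fv: "f v < real d" and vs: "v \<in> space M" unfolding Bad_def by auto
    have "1 \<le> exp (3/10 * real d + (-(3/10) * f v))" using fv by simp
    then have "1 \<le> E * exp (-(3/10) * f v)" unfolding E_def exp_add[symmetric] .
    then have "1 \<le> ennreal (E * exp (-(3/10) * f v))" by simp
    then show "v \<in> {v\<in>space M. 1 \<le> ennreal E * u v}"
      using vs Epos by (simp add: u_eq ennreal_mult)
  qed
  have setm: "{v\<in>space M. 1 \<le> ennreal E * u v} \<in> sets M" by measurable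
  have "emeasure M Bad \<le> ennreal E * ennreal ((1/4)^d)"
  proof -
    have "emeasure M Bad \<le> emeasure M {v\<in>space M. 1 \<le> ennreal E * u v}"
      by (rule emeasure_mono[OF sub setm])
    also have "\<dots> \<le> ennreal E * (\<integral>\<^sup>+ v. u v \<partial>M)" using markov ind by simp
    also have "\<dots> \<le> ennreal E * ennreal ((1/4)^d)" using int by (rule mult_left_mono) simp
    finally show ?thesis .
  qed
  then have "ennreal (M.prob Bad) \<le> ennreal (E * (1/4)^d)"
    using Epos by (simp add: M.emeasure_eq_measure ennreal_mult)
  then have pB: "M.prob Bad \<le> E * (1/4)^d"
    using Epos by (subst (asm) ennreal_le_iff) auto
  have E2: "E \<le> 2^d"
  proof -
    have "exp (3/10::real) \<le> 1 + 2 * norm (3/10::real)" using exp_bound_lemma[of "3/10::real"] by simp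
    then have e3: "exp (3/10::real) \<le> 2" by simp
    have "E = exp (3/10) ^ d" unfolding E_def using exp_of_nat_mult[of d "3/10::real"] by (simp add: mult.commute)
    also have "\<dots> \<le> 2^d" using e3 by (intro power_mono) auto
    finally show ?thesis .
  qed
  have "M.prob Bad \<le> 2^d * (1/4)^d" using pB E2 by (smt (verit) mult_right_mono zero_le_power zero_le_divide_iff)
  also have "\<dots> = 1 / 2^d"
  proof -
    have "(4::real)^d = 2^d * 2^d" using power_mult_distrib[of "2::real" 2 d] by simp
    then show ?thesis by (simp add: power_one_over)
  qed
  also have "\<dots> \<le> 1 / real d ^ 5"
  proof -
    have "real (d^5) \<le> real (2^d)" using pow5_le_2pow[OF d23] by linarith
    then have "real d ^ 5 \<le> 2 ^ d" by simp
    moreover have "real d ^ 5 > 0" using d23 by simp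
    ultimately show ?thesis by (intro divide_left_mono) auto
  qed
  finally have pB2: "M.prob Bad \<le> 1 / real d ^ 5" .
  have "M.prob S = 1 - M.prob Bad" unfolding SBad by (rule M.prob_compl[OF Bad_ev])
  then have "M.prob S \<ge> 1 - 1 / real d ^ 5" using pB2 by simp
  then show "measure (std_gaussian d)
        {v \<in> space (std_gaussian d).
           Ham d \<kappa> (x0, v) - Ham d \<kappa> (leapfrog \<kappa> \<eta> K (x0, v)) \<le> - (1/2) * real d}
      \<ge> 1 - 1 / real d ^ 5" unfolding S_def M_def by simp
qed simp

end
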